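(* Consider a power allocation game among countries $\mathbf{n}=\{1,\dots,n\}$ on a simple undirected signed graph, with friend sets $\mathcal{F}_i$ (with $i\in\mathcal{F}_i$), adversary sets $\mathcal{A}_i$ ($\mathcal{F}_i\cap\mathcal{A}_i=\emptyset$) and total powers $p_i\ge 0$. Then for every strategy matrix $U=[u_{ij}]\in\mathcal{U}$ there exists a country $i\in\mathbf{n}$ with $x_i(U)\in\{\text{safe},\text{precarious}\}$, i.e. with $\sum_{j\in\mathcal{F}_i}u_{ji}+\sum_{j\in\mathcal{A}_i}u_{ij}\ \ge\ \sum_{j\in\mathcal{A}_i}u_{ji}$. (This holds for every strategy matrix, whether or not it is an equilibrium.)
   Context: Power allocation game (PAG): $n$ countries are the vertices of a simple undirected signed graph; an edge $(i,j)$ labelled $+$ means $i,j$ are friends, labelled $-$ means adversaries. For each $i$, $\mathcal{F}_i$ is the set of friends of $i$, with the convention $i\in\mathcal{F}_i$, and $\mathcal{A}_i$ the set of adversaries; these are disjoint. Country $i$ has total power $p_i\ge 0$. A strategy matrix is a nonnegative $n\times n$ matrix $U=[u_{ij}]$ with $\sum_{j}u_{ij}=p_i$ for each $i$ and $u_{ij}=0$ whenever $j\notin\mathcal{F}_i\cup\mathcal{A}_i$; $\mathcal{U}$ is the set of all strategy matrices. The total support of $i$ is $\sigma_i(U)=\sum_{j\in\mathcal{F}_i}u_{ji}+\sum_{j\in\mathcal{A}_i}u_{ij}$ and the total threat is $\tau_i(U)=\sum_{j\in\mathcal{A}_i}u_{ji}$. The state $x_i(U)$ is safe if $\sigma_i(U)>\tau_i(U)$,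 precarious if $\sigma_i(U)=\tau_i(U)$, unsafe if $\sigma_i(U)<\tau_i(U)$. *)

theory Defs
  imports Main "HOL-Library.Multiset" Complex_Main
begin

definition signed_graph :: "nat \<Rightarrow> (nat \<Rightarrow> nat set) \<Rightarrow> (nat \<Rightarrow> nat set) \<Rightarrow> bool" where
  "signed_graph n Fr Ad \<longleftrightarrow>
     (\<forall>i\<in>{1..n}. Fr i \<subseteq> {1..n} \<and> Ad i \<subseteq> {1..n} \<and> i \<in> Fr i \<and> i \<notin> Ad i
        \<and> Fr i \<inter> Ad i = {}) \<and>
     (\<forall>i\<in>{1..n}. \<forall>j\<in>{1..n}. (j \<in> Fr i \<longleftrightarrow> i \<in> Fr j) \<and> (j \<in> Ad i \<longleftrightarrow> i \<in> Ad j))"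

definition strategy_matrix ::
  "nat \<Rightarrow> (nat \<Rightarrow> nat set) \<Rightarrow> (nat \<Rightarrow> nat set) \<Rightarrow> (nat \<Rightarrow> real) \<Rightarrow> (nat \<Rightarrow> nat \<Rightarrow> real) \<Rightarrow> bool" where
  "strategy_matrix n Fr Ad p U \<longleftrightarrow>
     (\<forall>i\<in>{1..n}. \<forall>j\<in>{1..n}. U i j \<ge> 0) \<and>
     (\<forall>i\<in>{1..n}. (\<Sum>j\<in>{1..n}. U i j) = p i) \<and>
     (\<forall>i\<in>{1..n}. \<forall>j\<in>{1..n}. j \<notin> Fr i \<union> Ad i \<longrightarrow> U i j = 0)"

definition support :: "(nat \<Rightarrow> nat set) \<Rightarrow> (nat \<Rightarrow> nat set) \<Rightarrow> (nat \<Rightarrow> nat \<Rightarrow> real) \<Rightarrow> nat \<Rightarrow> real" where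
  "support Fr Ad U i = (\<Sum>j\<in>Fr i. U j i) + (\<Sum>j\<in>Ad i. U i j)"

definition threat :: "(nat \<Rightarrow> nat set) \<Rightarrow> (nat \<Rightarrow> nat \<Rightarrow> real) \<Rightarrow> nat \<Rightarrow> real" where
  "threat Ad U i = (\<Sum>j\<in>Ad i. U j i)"

definition safe where "safe Fr Ad U i \<longleftrightarrow> support Fr Ad U i > threat Ad U i"
definition precarious where "precarious Fr Ad U i \<longleftrightarrow> support Fr Ad U i = threat Ad U i"
definition unsafe where "unsafe Fr Ad U i \<longleftrightarrow> support Fr Ad U i < threat Ad U i"

end

theory Submission
  imports Defs
begin

theorem lemma1:
  fixes n :: nat and Fr Ad :: "nat \<Rightarrow> nat set" and p :: "nat \<Rightarrow> real"
    and U :: "nat \<Rightarrow> nat \<Rightarrow> real"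
  assumes "n \<ge> 1"
    and "signed_graph n Fr Ad"
    and "\<forall>i\<in>{1..n}. p i \<ge> 0"
    and "strategy_matrix n Fr Ad p U"
  shows "\<exists>i\<in>{1..n}. safe Fr Ad U i \<or> precarious Fr Ad U i"
proof (rule ccontr)
  let ?N = "{1..n}"
  assume "\<not> ?thesis"
  hence lt: "\<forall>i\<in>?N. support Fr Ad U i < threat Ad U i"
    unfolding safe_def precarious_def by auto
  have G: "\<And>i. i \<in> ?N \<Longrightarrow> Fr i \<subseteq> ?N \<and> Ad i \<subseteq> ?N"
    and Sym: "\<And>i j. i \<in> ?N \<Longrightarrow> j \<in> ?N \<Longrightarrow> (j \<in> Ad i \<longleftrightarrow> i \<in> Ad j)"
    using assms(2) unfolding signed_graph_def by blast+
  have nn: "\<And>i j. i \<in> ?N \<Longrightarrow> j \<in> ?N \<Longrightarrow> U i j \<ge> 0"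
    using assms(4) unfolding strategy_matrix_def by blast
  have AdE: "\<And>i. i \<in> ?N \<Longrightarrow> Ad i = {j\<in>?N. j \<in> Ad i}" using G by blast
  have "(\<Sum>i\<in>?N. threat Ad U i) = (\<Sum>i\<in>?N. \<Sum>j\<in>{j\<in>?N. j \<in> Ad i}. U j i)"
    unfolding threat_def by (rule sum.cong) (use AdE in auto)
  also have "\<dots> = (\<Sum>j\<in>?N. \<Sum>i\<in>{i\<in>?N. j \<in> Ad i}. U j i)"
    by (rule sum.swap_restrict) auto
  also have "\<dots> = (\<Sum>j\<in>?N. \<Sum>i\<in>Ad j. U j i)"
  proof (rule sum.cong)
    fix j assume j: "j \<in> ?N"
    have "{i\<in>?N. j \<in> Ad i} = Ad j" using G[OF j] Sym[OF _ j] by blast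
    thus "(\<Sum>i\<in>{i\<in>?N. j \<in> Ad i}. U j i) = (\<Sum>i\<in>Ad j. U j i)" by simp
  qed simp
  finally have T: "(\<Sum>i\<in>?N. threat Ad U i) = (\<Sum>j\<in>?N. \<Sum>i\<in>Ad j. U j i)" .
  have "(\<Sum>j\<in>?N. \<Sum>i\<in>Ad j. U j i) \<le> (\<Sum>i\<in>?N. support Fr Ad U i)"
    unfolding support_def
  proof (rule sum_mono)
    fix i assume i: "i \<in> ?N"
    have "0 \<le> (\<Sum>j\<in>Fr i. U j i)"
      by (rule sum_nonneg) (use G[OF i] nn i in blast)
    thus "(\<Sum>j\<in>Ad i. U i j) \<le> (\<Sum>j\<in>Fr i. U j i) + (\<Sum>j\<in>Ad i. U i j)" by simp
  qed
  moreover have "(\<Sum>i\<in>?N. support Fr Ad U i) < (\<Sum>i\<in>?N. threat Ad U i)"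
    by (rule sum_strict_mono) (use lt assms(1) in auto)
  ultimately show False using T by linarith
qed

end
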